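(* For every positive integer $k$, the cycle $C_{6k}$ is edge-critical for $3$ colours; hence $\{C_{6k}: k\in\mathbb{N}\}$ is an infinite family of edge-critical graphs for $3$ colours.
   Context: An undirected graph is identified with the directed graph having both arcs for each edge; $N^-(v)$ is the set of neighbours of $v$. For $q\ge2$ let $[q]=\{0,\dots,q-1\}$. A $D$-function over $[q]$ is a map $f=(f_v)_{v\in V}:[q]^V\to[q]^V$ with each $f_v(x)$ depending only on $(x_u)_{u\in N^-(v)}$. $D$ is $q$-solvable if some $D$-function $f$ over $[q]$ has the property that for every $x\in[q]^V$ there is $v$ with $f_v(x)=x_v$. An undirected graph $G$ is edge-critical for $q$ colours if $G$ is $q$-solvable but $G-e$ (same vertex set, edge $e$ removed) is not $q$-solvable for every edge $e$ of $G$. *)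

theory Defs
  imports "HOL-Library.FuncSet"
begin

text \<open>An undirected graph is given by a vertex set V and a symmetric adjacency
  relation E (an edge uv is identified with both arcs (u,v),(v,u)).\<close>

definition in_nbrs :: "'v set \<Rightarrow> ('v \<Rightarrow> 'v \<Rightarrow> bool) \<Rightarrow> 'v \<Rightarrow> 'v set" where
  "in_nbrs V E v = {u \<in> V. E u v}"

definition configs :: "nat \<Rightarrow> 'v set \<Rightarrow> ('v \<Rightarrow> nat) set" where
  "configs q V = V \<rightarrow>\<^sub>E {0..<q}"

definition is_D_function :: "nat \<Rightarrow> 'v set \<Rightarrow> ('v \<Rightarrow> 'v \<Rightarrow> bool)
    \<Rightarrow> ('v \<Rightarrow> ('v \<Rightarrow> nat) \<Rightarrow> nat) \<Rightarrow> bool" where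
  "is_D_function q V E f \<longleftrightarrow>
     (\<forall>v\<in>V. \<forall>x\<in>configs q V. f v x \<in> {0..<q}) \<and>
     (\<forall>v\<in>V. \<forall>x\<in>configs q V. \<forall>y\<in>configs q V.
        (\<forall>u\<in>in_nbrs V E v. x u = y u) \<longrightarrow> f v x = f v y)"

definition q_solvable :: "nat \<Rightarrow> 'v set \<Rightarrow> ('v \<Rightarrow> 'v \<Rightarrow> bool) \<Rightarrow> bool" where
  "q_solvable q V E \<longleftrightarrow>
     (\<exists>f. is_D_function q V E f \<and>
          (\<forall>x\<in>configs q V. \<exists>v\<in>V. f v x = x v))"

definition remove_edge :: "('v \<Rightarrow> 'v \<Rightarrow> bool) \<Rightarrow> 'v \<Rightarrow> 'v \<Rightarrow> ('v \<Rightarrow> 'v \<Rightarrow> bool)" where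
  "remove_edge E a b = (\<lambda>x y. E x y \<and> {x, y} \<noteq> {a, b})"

definition edge_critical :: "nat \<Rightarrow> 'v set \<Rightarrow> ('v \<Rightarrow> 'v \<Rightarrow> bool) \<Rightarrow> bool" where
  "edge_critical q V E \<longleftrightarrow>
     q_solvable q V E \<and>
     (\<forall>a\<in>V. \<forall>b\<in>V. E a b \<longrightarrow> \<not> q_solvable q V (remove_edge E a b))"

definition cycle_V :: "nat \<Rightarrow> nat set" where
  "cycle_V n = {0..<n}"

definition cycle_E :: "nat \<Rightarrow> nat \<Rightarrow> nat \<Rightarrow> bool" where
  "cycle_E n i j \<longleftrightarrow> i < n \<and> j < n \<and> (j = (i + 1) mod n \<or> i = (j + 1) mod n)"

end

theory Submission
  imports Defs
begin

section \<open>Finite tables for the winning strategy on C_{3m}\<close>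

definition tabs :: "nat list list list" where "tabs = [[[1, 2, 1], [1, 0, 0], [2, 2, 0]], [[0, 0, 1], [1, 2, 1], [0, 2, 2]], [[2, 2, 1], [0, 1, 1], [0, 2, 0]], [[2, 1, 1], [0, 1, 0], [2, 2, 0]], [[1, 0, 1], [2, 0, 0], [2, 2, 1]], [[0, 2, 0], [0, 1, 1], [2, 2, 1]]]"
definition qtab :: "(nat \<times> nat) list list" where "qtab = [[(0,1), (0,2), (1,0), (1,1), (1,2), (2,0), (2,1), (2,2)], [(1,0), (2,2)], [(0,1), (1,0), (1,1), (2,2)], [(0,1), (2,2)], [(0,1), (0,2), (1,0), (2,0), (2,2)], [(0,1), (0,2), (1,0), (1,1), (2,0), (2,1), (2,2)], [(0,1), (0,2), (1,0), (1,1), (2,2)], [(0,0), (0,1), (0,2), (1,0), (1,1), (1,2), (2,0), (2,2)], [(0,1), (1,0)]]"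

definition rl :: "nat \<Rightarrow> nat \<Rightarrow> nat \<Rightarrow> nat" where "rl t l r = tabs ! t ! l ! r"

definition Q :: "nat \<Rightarrow> nat \<Rightarrow> nat \<Rightarrow> nat \<Rightarrow> bool" where
  "Q s1 s2 a b \<longleftrightarrow> (a,b) \<in> set (qtab ! (3*s1+s2))"

lemma less3: "(x::nat) < 3 \<longleftrightarrow> x = 0 \<or> x = 1 \<or> x = 2" by auto
lemma less6: "(x::nat) < 6 \<longleftrightarrow> x = 0 \<or> x = 1 \<or> x = 2 \<or> x = 3 \<or> x = 4 \<or> x = 5" by auto

lemma fin_init: "a<3 \<Longrightarrow> b<3 \<Longrightarrow> c<3 \<Longrightarrow> d<3 \<Longrightarrow> e<3 \<Longrightarrow>
  rl 0 a c \<noteq> b \<Longrightarrow> rl 1 b d \<noteq> c \<Longrightarrow> rl 2 c e \<noteq> d \<Longrightarrow> Q a b d e"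
  unfolding less3 by (elim disjE; simp add: rl_def Q_def tabs_def qtab_def)

lemma fin_irr: "a<3 \<Longrightarrow> b<3 \<Longrightarrow> \<not> Q a b a b"
  unfolding less3 by (elim disjE; simp add: Q_def qtab_def)

lemma fin_step: "s<3 \<Longrightarrow> t<3 \<Longrightarrow> a<3 \<Longrightarrow> b<3 \<Longrightarrow> c<3 \<Longrightarrow> d<3 \<Longrightarrow> e<3 \<Longrightarrow> Q s t a b \<Longrightarrow>
  rl 3 a c \<noteq> b \<Longrightarrow> rl 4 b d \<noteq> c \<Longrightarrow> rl 5 c e \<noteq> d \<Longrightarrow> Q s t d e"
  unfolding less3 by (elim disjE; simp add: rl_def Q_def tabs_def qtab_def)

lemma rl3: "t<6 \<Longrightarrow> l<3 \<Longrightarrow> r<3 \<Longrightarrow> rl t l r < 3"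
  unfolding less3 less6 by (elim disjE; simp add: rl_def tabs_def)

lemma upd_C: "y \<in> configs 3 {0..<(m::nat)} \<Longrightarrow> j < m \<Longrightarrow> v < 3 \<Longrightarrow> y(j := v) \<in> configs 3 {0..<m}"
proof -
  assume a: "y \<in> configs 3 {0..<m}" "j < m" "v < 3"
  have "insert j {0..<m} = {0..<m}" using a by auto
  then show ?thesis using a PiE_fun_upd[of v "\<lambda>_. {0..<3}" j y "{0..<m}"] unfolding configs_def by simp
qed

lemma C_val: "y \<in> configs 3 {0..<(m::nat)} \<Longrightarrow> j < m \<Longrightarrow> y j < 3"
  unfolding configs_def using PiE_mem[of y "{0..<m}" "\<lambda>_. {0..<3}" j] by auto



lemma path_lemma:
  fixes m :: nat and g :: "nat \<Rightarrow> (nat \<Rightarrow> nat) \<Rightarrow> nat"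
  assumes m: "m \<ge> 1"
    and loc: "\<And>i y y'. i < m \<Longrightarrow> y \<in> configs 3 {0..<m} \<Longrightarrow> y' \<in> configs 3 {0..<m}
       \<Longrightarrow> (\<And>j. j < m \<Longrightarrow> j+1 = i \<or> j = i+1 \<Longrightarrow> y j = y' j) \<Longrightarrow> g i y = g i y'"
  shows "\<exists>y\<in>configs 3 {0..<m}. \<forall>i<m. g i y \<noteq> y i"
proof -
  define y0 where "y0 = restrict (\<lambda>_. 0::nat) {0..<m}"
  have y0C: "y0 \<in> configs 3 {0..<m}" unfolding y0_def configs_def by auto
  define P where "P i c a \<longleftrightarrow> (\<exists>y\<in>configs 3 {0..<m}. y i = a \<and> (i+1<m \<longrightarrow> y (i+1) = c) \<and> (\<forall>j\<le>i. g j y \<noteq> y j))" for i c a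
  have S: "\<forall>c<3. \<exists>e. \<forall>a<3. a \<noteq> e \<longrightarrow> P i c a" if "i < m" for i
    using that
  proof (induction i)
    case 0
    show ?case
    proof (intro allI impI)
      fix c :: nat assume c: "c < 3"
      define yc where "yc = (if 1 < m then y0(1 := c) else y0)"
      have ycC: "yc \<in> configs 3 {0..<m}" using y0C c upd_C unfolding yc_def by auto
      show "\<exists>e. \<forall>a<3. a \<noteq> e \<longrightarrow> P 0 c a"
      proof (intro exI allI impI)
        fix a :: nat assume a: "a < 3" "a \<noteq> g 0 yc"
        define y where "y = yc(0 := a)"
        have yC: "y \<in> configs 3 {0..<m}" using upd_C[OF ycC _ a(1)] m unfolding y_def by auto
        have "g 0 y = g 0 yc" by (rule loc) (use m yC ycC in \<open>auto simp: y_def\<close>)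
        then show "P 0 c a" unfolding P_def using yC a by (intro bexI[of _ y]) (auto simp: y_def yc_def)
      qed
    qed
  next
    case (Suc i)
    then have im: "i+1 < m" and IH: "\<forall>c<3. \<exists>e. \<forall>a<3. a \<noteq> e \<longrightarrow> P i c a" by auto
    from IH obtain E where E: "\<And>c a. c < 3 \<Longrightarrow> a < 3 \<Longrightarrow> a \<noteq> E c \<Longrightarrow> P i c a" by metis
    show ?case
    proof (intro allI impI)
      fix c :: nat assume c: "c < 3"
      define w where "w b = (if i+2 < m then y0(i := b, i+2 := c) else y0(i := b))" for b
      have wC: "w b \<in> configs 3 {0..<m}" if "b < 3" for b
        using y0C c that upd_C im unfolding w_def by auto
      define h where "h b = g (i+1) (w b)" for b
      define bad where "bad a \<longleftrightarrow> (\<forall>b<3. b \<noteq> E a \<longrightarrow> h b = a)" for a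
      have uniq: "a = a'" if "bad a" "bad a'" for a a'
      proof -
        have "\<exists>b\<in>{0,1,2::nat}. b \<noteq> E a \<and> b \<noteq> E a'" by auto
        then obtain b where b0: "b \<in> {0,1,2::nat}" "b \<noteq> E a" "b \<noteq> E a'" by blast
        then have "b < 3" by auto
        with b0 show ?thesis using that unfolding bad_def by metis
      qed
      have "\<exists>e. \<forall>a<3. a \<noteq> e \<longrightarrow> \<not> bad a"
      proof (cases "\<exists>a<3. bad a")
        case True
        then obtain a0 where "bad a0" by auto
        then show ?thesis using uniq by blast
      next
        case False
        then show ?thesis by blast
      qed
      then obtain e where e: "\<And>a. a < 3 \<Longrightarrow> a \<noteq> e \<Longrightarrow> \<not> bad a" by blast
      show "\<exists>e. \<forall>a<3. a \<noteq> e \<longrightarrow> P (Suc i) c a"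
      proof (intro exI[of _ e] allI impI)
        fix a assume a: "a<3" "a \<noteq> e"
        then have "\<not> bad a" using e by auto
        then obtain b where b: "b<3" "b \<noteq> E a" "h b \<noteq> a" unfolding bad_def by auto
        from E[OF a(1) b(1) b(2)] obtain y where y: "y \<in> configs 3 {0..<m}" "y i = b" "y (i+1) = a"
          "\<forall>j\<le>i. g j y \<noteq> y j" unfolding P_def using im by auto
        define y' where "y' = (if i+2 < m then y(i+2 := c) else y)"
        have y'C: "y' \<in> configs 3 {0..<m}" using y(1) upd_C c unfolding y'_def by auto
        have agree: "y' j = y j" if "j \<le> i+1" for j using that unfolding y'_def by auto
        have old: "g j y' = g j y" if "j \<le> i" for j
          by (rule loc) (use that im y'C y(1) agree in auto)
        have new: "g (i+1) y' = h b" unfolding h_def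
          by (rule loc) (use im y'C wC[OF b(1)] y(2) in \<open>auto simp: y'_def w_def\<close>)
        show "P (Suc i) c a" unfolding P_def
        proof (intro bexI[of _ y'] conjI)
          show "y' (Suc i) = a" using agree[of "i+1"] y(3) by simp
          show "Suc i + 1 < m \<longrightarrow> y' (Suc i + 1) = c" by (simp add: y'_def)
          show "\<forall>j\<le>Suc i. g j y' \<noteq> y' j"
          proof (intro allI impI)
            fix j assume j: "j \<le> Suc i"
            show "g j y' \<noteq> y' j"
            proof (cases "j \<le> i")
              case True
              then show ?thesis using old agree y(4) by auto
            next
              case False
              then have "j = i+1" using j by auto
              then show ?thesis using new b(3) agree[of "i+1"] y(3) by simp
            qed
          qed
        qed (rule y'C)
      qed
    qed
  qed
  have "m - 1 < m" using m by auto
  from S[OF this] have "\<exists>e. \<forall>a<3. a \<noteq> e \<longrightarrow> P (m-1) 0 a" by (metis zero_less_numeral)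
  then obtain e where e: "\<forall>a<3. a \<noteq> e \<longrightarrow> P (m-1) 0 a" by blast
  define a where "a = (if e = 0 then 1 else (0::nat))"
  have "a < 3" "a \<noteq> e" unfolding a_def by auto
  with e have "P (m-1) 0 a" by auto
  then obtain y where y: "y \<in> configs 3 {0..<m}" "\<forall>j\<le>m-1. g j y \<noteq> y j" unfolding P_def by auto
  show ?thesis
  proof (intro bexI[of _ y] allI impI)
    fix i assume "i < m"
    then show "g i y \<noteq> y i" using y(2) by auto
  qed (rule y(1))
qed


lemma remove_edge_sym: "remove_edge E a b = remove_edge E b a"
  unfolding remove_edge_def by (intro ext) (auto simp: insert_commute)

lemma mod_cancel_aux: "(s::nat) < n \<Longrightarrow> ((s + t) mod n + (n - s)) mod n = t mod n"
proof -
  assume s: "s < n"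
  have "((s + t) mod n + (n - s)) mod n = (s + t + (n - s)) mod n" by (simp add: mod_add_left_eq)
  also have "s + t + (n - s) = t + n" using s by simp
  finally show ?thesis by simp
qed

lemma mod_cancel: "(s::nat) < n \<Longrightarrow> (s + i) mod n = (s + t) mod n \<Longrightarrow> i mod n = t mod n"
  by (metis mod_cancel_aux)

lemma last_a: "(a::nat) < n \<Longrightarrow> ((a + 1) mod n + (n - 1)) mod n = a"
proof -
  assume a: "a < n"
  have "((a + 1) mod n + (n - 1)) mod n = (a + 1 + (n - 1)) mod n" by (simp add: mod_add_left_eq)
  also have "a + 1 + (n - 1) = a + n" using a by simp
  finally show ?thesis using a by simp
qed

lemma not_solv_dir:
  assumes n: "n \<ge> 3" and a: "a < n" and b: "b = (a+1) mod n"
  shows "\<not> q_solvable 3 {0..<n} (remove_edge (cycle_E n) a b)"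
proof
  define G where "G = remove_edge (cycle_E n) a b"
  assume "q_solvable 3 {0..<n} (remove_edge (cycle_E n) a b)"
  then obtain f where fD: "is_D_function 3 {0..<n} G f"
    and win: "\<forall>x\<in>configs 3 {0..<n}. \<exists>v\<in>{0..<n}. f v x = x v"
    unfolding q_solvable_def G_def by blast
  have np: "n > 0" using n by auto
  define s where "s = b"
  have s: "s < n" unfolding s_def b using np by simp
  define p where "p i = (s + i) mod n" for i
  define pinv where "pinv v = (v + n - s) mod n" for v
  define T where "T y = restrict (\<lambda>v. y (pinv v)) {0..<n}" for y :: "nat \<Rightarrow> nat"
  have pinv_lt: "pinv v < n" for v unfolding pinv_def using np by simp
  have p_pinv: "p (pinv v) = v" if "v < n" for v
  proof -
    have "p (pinv v) = (s + (v + n - s)) mod n" unfolding p_def pinv_def by (simp add: mod_add_right_eq)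
    also have "s + (v + n - s) = v + n" using s by simp
    finally show ?thesis using that by simp
  qed
  have TC: "T y \<in> configs 3 {0..<n}" if "y \<in> configs 3 {0..<n}" for y
    unfolding configs_def T_def using C_val[OF that pinv_lt] by auto
  have adj: "j+1 = i \<or> j = i+1" if ij: "i < n" "j < n" and G: "G (p j) (p i)" for i j
  proof -
    from G have E: "cycle_E n (p j) (p i)" and ne: "{p j, p i} \<noteq> {a, b}"
      unfolding G_def remove_edge_def by auto
    have pa: "p (n - 1) = a" unfolding p_def s_def b using last_a[OF a] .
    have pb: "p 0 = b" unfolding p_def s_def using s s_def by simp
    from E consider "p i = (p j + 1) mod n" | "p j = (p i + 1) mod n" unfolding cycle_E_def by auto
    then show ?thesis
    proof cases
      case 1
      then have "(s + i) mod n = (s + (j + 1)) mod n" unfolding p_def by (simp add: mod_add_left_eq add.assoc mod_Suc_eq)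
      then have "i mod n = (j + 1) mod n" using mod_cancel[OF s] by blast
      then have ii: "i = (j+1) mod n" using ij by simp
      show ?thesis
      proof (cases "j + 1 < n")
        case True then show ?thesis using ii by simp
      next
        case False
        then have jn: "j + 1 = n" using ij by auto
        then have "j = n - 1" "i = 0" using ii by auto
        then have "{p j, p i} = {a, b}" using pa pb by simp
        then show ?thesis using ne by simp
      qed
    next
      case 2
      then have "(s + j) mod n = (s + (i + 1)) mod n" unfolding p_def by (simp add: mod_add_left_eq add.assoc mod_Suc_eq)
      then have "j mod n = (i + 1) mod n" using mod_cancel[OF s] by blast
      then have jj: "j = (i+1) mod n" using ij by simp
      show ?thesis
      proof (cases "i + 1 < n")
        case True then show ?thesis using jj by simp
      next
        case False
        then have jn: "i + 1 = n" using ij by auto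
        then have "i = n - 1" "j = 0" using jj by auto
        then have "{p j, p i} = {a, b}" using pa pb by auto
        then show ?thesis using ne by simp
      qed
    qed
  qed
  define g where "g i y = f (p i) (T y)" for i y
  have "\<exists>y\<in>configs 3 {0..<n}. \<forall>i<n. g i y \<noteq> y i"
  proof (rule path_lemma)
    show "1 \<le> n" using n by simp
  next
    fix i y y'
    assume i: "i < n" and yC: "y \<in> configs 3 {0..<n}" and y'C: "y' \<in> configs 3 {0..<n}"
      and ag: "\<And>j. j < n \<Longrightarrow> j+1 = i \<or> j = i+1 \<Longrightarrow> y j = y' j"
    have pi: "p i \<in> {0..<n}" unfolding p_def using np by simp
    have "\<forall>u\<in>in_nbrs {0..<n} G (p i). T y u = T y' u"
    proof
      fix u assume u: "u \<in> in_nbrs {0..<n} G (p i)"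
      then have un: "u < n" and Gu: "G u (p i)" unfolding in_nbrs_def by auto
      have "G (p (pinv u)) (p i)" using Gu p_pinv[OF un] by simp
      then have "pinv u + 1 = i \<or> pinv u = i + 1" using adj[OF i pinv_lt] by blast
      then have "y (pinv u) = y' (pinv u)" using ag pinv_lt by blast
      then show "T y u = T y' u" unfolding T_def using un by simp
    qed
    then show "g i y = g i y'" unfolding g_def
      using fD pi TC[OF yC] TC[OF y'C] unfolding is_D_function_def by blast
  qed
  then obtain y where yC: "y \<in> configs 3 {0..<n}" and yl: "\<forall>i<n. g i y \<noteq> y i" by blast
  from win TC[OF yC] obtain v where v: "v < n" "f v (T y) = T y v" by auto
  have "g (pinv v) y \<noteq> y (pinv v)" using yl pinv_lt by blast
  moreover have "g (pinv v) y = f v (T y)" unfolding g_def using p_pinv[OF v(1)] by simp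
  moreover have "T y v = y (pinv v)" unfolding T_def using v(1) by simp
  ultimately show False using v(2) by simp
qed


lemma lft_eq: "1 \<le> (v::nat) \<Longrightarrow> v \<le> n \<Longrightarrow> (v + n - 1) mod n = v - 1"
proof -
  assume v: "1 \<le> v" "v \<le> n"
  have "v + n - 1 = (v - 1) + n" using v by simp
  then have "(v + n - 1) mod n = ((v - 1) + n) mod n" by (simp only:)
  also have "\<dots> = (v - 1) mod n" by simp
  also have "\<dots> = v - 1" using v by simp
  finally show ?thesis .
qed

lemma solvable:
  assumes m: "m \<ge> 2" and nm: "n = 3 * m"
  shows "q_solvable 3 {0..<n} (cycle_E n)"
proof -
  have n6: "n \<ge> 6" using m nm by simp
  define lft where "lft v = (v + n - 1) mod n" for v
  define rgt where "rgt v = (v + 1) mod n" for v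
  define tp where "tp v = (if v < 3 then v else 3 + v mod 3)" for v :: nat
  define F where "F v x = rl (tp v) (x (lft v)) (x (rgt v))" for v and x :: "nat \<Rightarrow> nat"
  have lft_lt: "lft v < n" for v unfolding lft_def using n6 by simp
  have rgt_lt: "rgt v < n" for v unfolding rgt_def using n6 by simp
  have tp6: "tp v < 6" for v unfolding tp_def by auto
  have lft_nb: "lft v \<in> in_nbrs {0..<n} (cycle_E n) v" if "v < n" for v
  proof -
    have "((v + n - 1) mod n + 1) mod n = (v + n - 1 + 1) mod n" by (simp add: mod_add_left_eq mod_Suc_eq)
    also have "v + n - 1 + 1 = v + n" using n6 by simp
    finally have "v = (lft v + 1) mod n" unfolding lft_def using that by simp
    then show ?thesis unfolding in_nbrs_def cycle_E_def using that lft_lt by auto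
  qed
  have rgt_nb: "rgt v \<in> in_nbrs {0..<n} (cycle_E n) v" if "v < n" for v
    unfolding in_nbrs_def cycle_E_def using that rgt_lt by (auto simp: rgt_def)
  have D: "is_D_function 3 {0..<n} (cycle_E n) F"
    unfolding is_D_function_def
  proof (intro conjI ballI impI)
    fix v x assume v: "v \<in> {0..<n}" and x: "x \<in> configs 3 {0..<n}"
    show "F v x \<in> {0..<3}" unfolding F_def
      using rl3[OF tp6 C_val[OF x lft_lt] C_val[OF x rgt_lt]] by simp
  next
    fix v x y assume v: "v \<in> {0..<n}" and "x \<in> configs 3 {0..<n}" "y \<in> configs 3 {0..<n}"
      and ag: "\<forall>u\<in>in_nbrs {0..<n} (cycle_E n) v. x u = y u"
    then show "F v x = F v y" unfolding F_def using lft_nb rgt_nb by auto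
  qed
  have W: "\<exists>v\<in>{0..<n}. F v x = x v" if x: "x \<in> configs 3 {0..<n}" for x
  proof (rule ccontr)
    assume "\<not> (\<exists>v\<in>{0..<n}. F v x = x v)"
    then have wr: "F v x \<noteq> x v" if "v < n" for v using that by auto
    have xv: "x v < 3" if "v < n" for v using C_val[OF x that] .
    define A where "A = x (n - 1)"
    define B where "B = x 0"
    have A3: "A < 3" and B3: "B < 3" unfolding A_def B_def using xv n6 by auto
    have inv: "Q A B (x (3*j - 1)) (x ((3*j) mod n))" if "1 \<le> j" "j \<le> m" for j
      using that
    proof (induction j rule: nat_induct_at_least)
      case base
      have l0: "lft 0 = n - 1" unfolding lft_def using n6 by simp
      have r0: "rgt 0 = 1" "lft 1 = 0" "rgt 1 = 2" "lft 2 = 1" "rgt 2 = 3"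
        unfolding lft_def rgt_def using n6 by (auto simp: mod_Suc)
      have t: "tp 0 = 0" "tp 1 = 1" "tp 2 = 2" unfolding tp_def by auto
      have "rl 0 A (x 1) \<noteq> B" using wr[of 0] n6 unfolding F_def A_def B_def l0 r0 t by simp
      moreover have "rl 1 B (x 2) \<noteq> x 1" using wr[of 1] n6 unfolding F_def B_def r0 t by simp
      moreover have "rl 2 (x 1) (x 3) \<noteq> x 2" using wr[of 2] n6 unfolding F_def r0 t by simp
      ultimately have "Q A B (x 2) (x 3)" using fin_init[OF A3 B3 xv[of 1] xv[of 2] xv[of 3]] n6 by simp
      moreover have "(3::nat) mod n = 3" using n6 by simp
      ultimately show ?case by simp
    next
      case (Suc j)
      have jm: "j + 1 \<le> m" "1 \<le> j" using Suc by auto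
      have "3*j < n" using jm nm by auto
      then have IH: "Q A B (x (3*j - 1)) (x (3*j))" using Suc by simp
      define v where "v = 3 * j"
      have v: "3 \<le> v" "v + 3 \<le> n" using jm nm unfolding v_def by auto
      have md: "(3*j) mod 3 = 0" "(3*j+1) mod 3 = 1" "(3*j+2) mod 3 = 2" by presburger+
      have tv: "tp v = 3" "tp (v+1) = 4" "tp (v+2) = 5" using jm md unfolding tp_def v_def by auto
      have lv1: "lft v = v - 1" unfolding lft_def using v by (intro lft_eq) auto
      have lv2: "lft (v+1) = v" unfolding lft_def using lft_eq[of "v+1" n] v by simp
      have lv3: "lft (v+2) = v+1" unfolding lft_def using lft_eq[of "v+2" n] v by simp
      note lv = lv1 lv2 lv3
      have rv: "rgt v = v+1" "rgt (v+1) = v+2" "rgt (v+2) = (v+3) mod n"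
        unfolding rgt_def using v by (auto simp: add.assoc numeral_3_eq_3)
      have "rl 3 (x (v-1)) (x (v+1)) \<noteq> x v" using wr[of v] v unfolding F_def tv lv rv by simp
      moreover have "rl 4 (x v) (x (v+2)) \<noteq> x (v+1)" using wr[of "v+1"] v unfolding F_def tv lv rv by simp
      moreover have "rl 5 (x (v+1)) (x ((v+3) mod n)) \<noteq> x (v+2)" using wr[of "v+2"] v unfolding F_def tv lv rv by simp
      moreover have "x (v-1) < 3" "x v < 3" "x (v+1) < 3" "x (v+2) < 3" "x ((v+3) mod n) < 3"
        using xv v n6 by auto
      ultimately have "Q A B (x (v+2)) (x ((v+3) mod n))"
        using fin_step[OF A3 B3] IH unfolding v_def by blast
      moreover have "3 * Suc j - 1 = v + 2" "3 * Suc j mod n = (v + 3) mod n" unfolding v_def by (auto simp: add.commute)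
      ultimately show ?case by (simp only:)
    qed
    have "Q A B (x (3*m - 1)) (x ((3*m) mod n))" using inv[of m] m by simp
    then have "Q A B A B" unfolding A_def B_def nm by simp
    then show False using fin_irr[OF A3 B3] by simp
  qed
  show ?thesis unfolding q_solvable_def using D W by blast
qed

theorem theorem17:
  fixes k :: nat
  assumes "k \<ge> 1"
  shows "edge_critical 3 (cycle_V (6 * k)) (cycle_E (6 * k))"
proof -
  define n where "n = 6 * k"
  have n6: "n \<ge> 6" using assms n_def by simp
  have "q_solvable 3 {0..<n} (cycle_E n)"
    by (rule solvable[of "2*k"]) (use assms n_def in auto)
  moreover have "\<not> q_solvable 3 {0..<n} (remove_edge (cycle_E n) a b)"
    if "a \<in> {0..<n}" "b \<in> {0..<n}" "cycle_E n a b" for a b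
  proof -
    from that consider "b = (a + 1) mod n" | "a = (b + 1) mod n" unfolding cycle_E_def by auto
    then show ?thesis
    proof cases
      case 1 then show ?thesis using not_solv_dir[of n a b] n6 that by auto
    next
      case 2 then show ?thesis using not_solv_dir[of n b a] n6 that remove_edge_sym[of "cycle_E n" a b] by auto
    qed
  qed
  ultimately show ?thesis unfolding edge_critical_def cycle_V_def n_def by blast
qed

end
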